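(* Let $(Z_0,\dots,Z_H)$ be a process on an abstract state space $\mathcal{Z}$ and fix steps $t<u\le H$. Consider two hypotheses $H_0,H_1$ under which $Z_t$ has distributions $P^{(0)}_{Z_t}\ll P^{(1)}_{Z_t}$ with $\chi^2(P^{(0)}_{Z_t}\|P^{(1)}_{Z_t})=\Delta^2\in(0,\infty)$, and under which, for $j\in\{t,\dots,u-1\}$, $Z_{j+1}$ given $Z_t,\dots,Z_j$ is distributed as $K_j(\cdot\mid Z_j)$ for Markov kernels $K_j$ common to both hypotheses with $\eta_{\chi^2}(K_j)\le\eta_j\in(0,1]$. Let $Y_u=g_u(Z_u)$ for a fixed function $g_u$. Let $\epsilon\in(0,1/2)$. Any test based on $n$ i.i.d. samples of $Y_u$ that distinguishes $H_0$ from $H_1$ with total testing error at most $\epsilon$ requires $$n\ge\frac{(1-\epsilon)^2}{\mathrm{Attn}(t\to u)\,\Delta^2},\qquad \mathrm{Attn}(t\to u):=\prod_{j=t}^{u-1}\eta_j.$$ In particular, if $\eta_j\equiv\eta$, then $n\ge(1-\epsilon)^2/(\eta^{u-t}\Delta^2)$.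
   Context: For distributions $P\ll Q$, $\chi^2(P\|Q)=\int(dP/dQ-1)^2dQ$; for a Markov kernel $K$, $PK$ is the pushforward and $\eta_{\chi^2}(K)=\sup\{\chi^2(PK\|QK)/\chi^2(P\|Q):P\ll Q,\ 0<\chi^2(P\|Q)<\infty\}$. For a test $\psi$ on $n$ i.i.d. samples, the total testing error is $\mathbb{P}_{H_0}(\psi=1)+\mathbb{P}_{H_1}(\psi=0)$. *)

theory Defs
  imports "HOL-Probability.Probability"
begin

definition chi2 :: "'a measure \<Rightarrow> 'a measure \<Rightarrow> ennreal" where
  "chi2 P Q = (if absolutely_continuous Q P
      then (\<integral>\<^sup>+ x. ennreal ((enn2real (RN_deriv Q P x) - 1)\<^sup>2) \<partial>Q)
      else \<infinity>)"

definition eta_chi2 :: "'a measure \<Rightarrow> ('a \<Rightarrow> 'a measure) \<Rightarrow> ennreal" where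
  "eta_chi2 S K = Sup {chi2 (P \<bind> K) (Q \<bind> K) / chi2 P Q | P Q.
      P \<in> space (prob_algebra S) \<and> Q \<in> space (prob_algebra S) \<and>
      absolutely_continuous Q P \<and> 0 < chi2 P Q \<and> chi2 P Q < \<infinity>}"

definition total_test_error ::
    "nat \<Rightarrow> 'y measure \<Rightarrow> 'y measure \<Rightarrow> ((nat \<Rightarrow> 'y) \<Rightarrow> bool) \<Rightarrow> real" where
  "total_test_error n Q0 Q1 \<psi> =
     measure (PiM {..<n} (\<lambda>_. Q0)) {x \<in> space (PiM {..<n} (\<lambda>_. Q0)). \<psi> x}
   + measure (PiM {..<n} (\<lambda>_. Q1)) {x \<in> space (PiM {..<n} (\<lambda>_. Q1)). \<not> \<psi> x}"

text \<open>Markov transition property under the probability measure M: for t \<le> j, the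
  conditional law of Z (j+1) given Z t, ..., Z j is K (Z j).\<close>
definition markov_step ::
    "'o measure \<Rightarrow> 'z measure \<Rightarrow> (nat \<Rightarrow> 'o \<Rightarrow> 'z) \<Rightarrow> nat \<Rightarrow> nat \<Rightarrow> ('z \<Rightarrow> 'z measure) \<Rightarrow> bool" where
  "markov_step M S Z t j K \<longleftrightarrow>
     (\<forall>B \<in> sets (PiM {t..j} (\<lambda>_. S)). \<forall>A \<in> sets S.
        measure M {\<omega> \<in> space M. restrict (\<lambda>i. Z i \<omega>) {t..j} \<in> B \<and> Z (Suc j) \<omega> \<in> A}
        = (\<integral>\<omega>. indicator {\<omega> \<in> space M. restrict (\<lambda>i. Z i \<omega>) {t..j} \<in> B} \<omega>
                 * measure (K (Z j \<omega>)) A \<partial>M))"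

end

theory Submission
  imports Defs
begin


lemma chi2_self:
  assumes "prob_space P" shows "chi2 P P = 0"
proof -
  interpret prob_space P by fact
  have ac: "absolutely_continuous P P" by (simp add: absolutely_continuous_def)
  have "AE x in P. (\<lambda>_. 1) x = RN_deriv P P x"
    by (rule RN_deriv_unique) (simp_all add: density_1)
  then have "AE x in P. ennreal ((enn2real (RN_deriv P P x) - 1)\<^sup>2) = 0"
    by eventually_elim (metis cancel_comm_monoid_add_class.diff_cancel enn2real_1 ennreal_0 power_zero_numeral)
  then show ?thesis
    by (simp add: chi2_def ac nn_integral_0_iff_AE)
qed


lemma chi2_zero_eq:
  assumes P: "prob_space P" and Q: "prob_space Q" and s: "sets P = sets Q"
    and ac: "absolutely_continuous Q P" and z: "chi2 P Q = 0"
  shows "P = Q"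
proof -
  interpret Q: prob_space Q by fact
  interpret P: prob_space P by fact
  have "AE x in Q. ennreal ((enn2real (RN_deriv Q P x) - 1)\<^sup>2) = 0"
    using z by (simp add: chi2_def ac nn_integral_0_iff_AE)
  moreover have "AE x in Q. RN_deriv Q P x \<noteq> \<infinity>"
    by (rule Q.RN_deriv_finite) (use ac s in \<open>auto intro: P.sigma_finite_measure\<close>)
  ultimately have "AE x in Q. RN_deriv Q P x = (\<lambda>_. 1) x"
  proof eventually_elim
    case (elim x)
    then have "enn2real (RN_deriv Q P x) = 1" by simp
    then have "ennreal (enn2real (RN_deriv Q P x)) = 1" by simp
    then show ?case using elim(2) by (simp add: ennreal_enn2real_if split: if_splits)
  qed
  then have "density Q (RN_deriv Q P) = density Q (\<lambda>_. 1)"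
    by (intro density_cong) auto
  then show ?thesis
    using Q.density_RN_deriv[OF ac s] by (simp add: density_1)
qed


lemma bind_ac:
  assumes P: "P \<in> space (prob_algebra S)" and Q: "Q \<in> space (prob_algebra S)"
    and K: "K \<in> S \<rightarrow>\<^sub>M prob_algebra S" and ac: "absolutely_continuous Q P"
  shows "absolutely_continuous (Q \<bind> K) (P \<bind> K)"
  unfolding absolutely_continuous_def
proof
  fix A assume A: "A \<in> null_sets (Q \<bind> K)"
  have sQ: "sets Q = sets S" and sP: "sets P = sets S" using P Q by (auto simp: space_prob_algebra)
  have AS: "A \<in> sets S" using A sets_bind'[OF Q K] by (auto simp: null_sets_def)
  have "(\<integral>\<^sup>+x. emeasure (K x) A \<partial>Q) = 0"
    using A emeasure_bind_prob_algebra[OF Q K AS] by (simp add: null_sets_def)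
  moreover have mK: "(\<lambda>x. emeasure (K x) A) \<in> borel_measurable Q"

    using measurable_compose[OF measurable_prob_algebraD[OF K] measurable_emeasure_subprob_algebra[OF AS]]
      sQ by (simp cong: measurable_cong_sets)
  ultimately have "AE x in Q. emeasure (K x) A = 0"
    by (simp add: nn_integral_0_iff_AE)
  then have "AE x in P. emeasure (K x) A = 0"
    using absolutely_continuous_AE[OF _ ac] sP sQ by auto
  then have "(\<integral>\<^sup>+x. emeasure (K x) A \<partial>P) = 0"
    using mK sP sQ by (simp add: nn_integral_0_iff_AE cong: measurable_cong_sets)
  then show "A \<in> null_sets (P \<bind> K)"
    using emeasure_bind_prob_algebra[OF P K AS] sets_bind'[OF P K] AS by (simp add: null_sets_def)
qed

lemma chi2_step:
  assumes P: "P \<in> space (prob_algebra S)" and Q: "Q \<in> space (prob_algebra S)"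
    and K: "K \<in> S \<rightarrow>\<^sub>M prob_algebra S" and ac: "absolutely_continuous Q P"
    and fin: "chi2 P Q < \<infinity>" and eta: "eta_chi2 S K \<le> ennreal e"
    and zq: "chi2 P Q = 0 \<Longrightarrow> P = Q"
    and self: "prob_space (Q \<bind> K) \<Longrightarrow> chi2 (Q \<bind> K) (Q \<bind> K) = 0"
  shows "chi2 (P \<bind> K) (Q \<bind> K) \<le> ennreal e * chi2 P Q"
proof cases
  assume "chi2 P Q = 0"
  then have "P = Q" by (rule zq)
  then show ?thesis by (simp add: self prob_space_bind'[OF Q K])
next
  assume nz: "chi2 P Q \<noteq> 0"
  have "chi2 (P \<bind> K) (Q \<bind> K) / chi2 P Q \<le> eta_chi2 S K"
    unfolding eta_chi2_def
  proof (rule Sup_upper)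
    have "0 < chi2 P Q" using nz by (simp add: zero_less_iff_neq_zero)
    then show "chi2 (P \<bind> K) (Q \<bind> K) / chi2 P Q \<in> {chi2 (P \<bind> K) (Q \<bind> K) / chi2 P Q | P Q.
      P \<in> space (prob_algebra S) \<and> Q \<in> space (prob_algebra S) \<and>
      absolutely_continuous Q P \<and> 0 < chi2 P Q \<and> chi2 P Q < \<infinity>}"
      using P Q ac fin by blast
  qed
  then have r: "chi2 (P \<bind> K) (Q \<bind> K) / chi2 P Q \<le> ennreal e" using eta by order
  have "chi2 (P \<bind> K) (Q \<bind> K) = chi2 (P \<bind> K) (Q \<bind> K) / chi2 P Q * chi2 P Q"
  proof -
    have "chi2 (P \<bind> K) (Q \<bind> K) / chi2 P Q * chi2 P Q = chi2 (P \<bind> K) (Q \<bind> K) * chi2 P Q / chi2 P Q"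
      by (simp add: divide_ennreal_def mult_ac)
    also have "\<dots> = chi2 (P \<bind> K) (Q \<bind> K)"
      using nz fin by (intro ennreal_mult_divide_eq) auto
    finally show ?thesis by simp
  qed
  also have "\<dots> \<le> ennreal e * chi2 P Q"
    using r by (intro mult_right_mono) auto
  finally show ?thesis .
qed

lemma distr_step:
  assumes M: "prob_space M" and tj: "t \<le> j"
    and Z: "\<And>i. i \<le> Suc j \<Longrightarrow> Z i \<in> M \<rightarrow>\<^sub>M S"
    and K: "K \<in> S \<rightarrow>\<^sub>M prob_algebra S" and ms: "markov_step M S Z t j K"
  shows "distr M S (Z (Suc j)) = distr M S (Z j) \<bind> K"
proof -
  interpret prob_space M by fact
  have Zj[measurable]: "Z j \<in> M \<rightarrow>\<^sub>M S" and Zs[measurable]: "Z (Suc j) \<in> M \<rightarrow>\<^sub>M S" using Z by auto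
  have Pj: "distr M S (Z j) \<in> space (prob_algebra S)"
    by (auto simp: space_prob_algebra intro!: prob_space_distr)
  have kp: "prob_space (K x)" if "x \<in> space S" for x
    using measurable_space[OF K that] by (simp add: space_prob_algebra)
  have mK: "(\<lambda>x. measure (K x) A) \<in> borel_measurable S" if "A \<in> sets S" for A
    using measurable_compose[OF K measurable_measure_prob_algebra[OF that]] .
  have mKe: "(\<lambda>x. emeasure (K x) A) \<in> borel_measurable S" if "A \<in> sets S" for A
    using measurable_compose[OF measurable_prob_algebraD[OF K] measurable_emeasure_subprob_algebra[OF that]] .
  show ?thesis
  proof (rule measure_eqI)
    show "sets (distr M S (Z (Suc j))) = sets (distr M S (Z j) \<bind> K)"
      using sets_bind'[OF Pj K] by simp
    fix A assume "A \<in> sets (distr M S (Z (Suc j)))"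
    then have A: "A \<in> sets S" by simp
    have restr: "restrict (\<lambda>i. Z i \<omega>) {t..j} \<in> space (PiM {t..j} (\<lambda>_. S))" if "\<omega> \<in> space M" for \<omega>
      using that Z measurable_space[OF Z] by (auto simp: space_PiM)
    have set_eq: "{\<omega> \<in> space M. restrict (\<lambda>i. Z i \<omega>) {t..j} \<in> space (PiM {t..j} (\<lambda>_. S)) \<and> Z (Suc j) \<omega> \<in> A}
        = Z (Suc j) -` A \<inter> space M"
      using restr by auto
    have set_eq2: "{\<omega> \<in> space M. restrict (\<lambda>i. Z i \<omega>) {t..j} \<in> space (PiM {t..j} (\<lambda>_. S))} = space M"
      using restr by auto
    have "emeasure (distr M S (Z (Suc j))) A = emeasure M (Z (Suc j) -` A \<inter> space M)"
      using A by (simp add: emeasure_distr)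
    also have "\<dots> = ennreal (measure M (Z (Suc j) -` A \<inter> space M))"
      by (simp add: emeasure_eq_measure)
    also have "measure M (Z (Suc j) -` A \<inter> space M) = (\<integral>\<omega>. indicator (space M) \<omega> * measure (K (Z j \<omega>)) A \<partial>M)"
      using ms A unfolding markov_step_def set_eq[symmetric]
      by (auto simp: set_eq2)
    also have "\<dots> = (\<integral>\<omega>. measure (K (Z j \<omega>)) A \<partial>M)"
      by (rule Bochner_Integration.integral_cong) auto
    also have "ennreal (\<integral>\<omega>. measure (K (Z j \<omega>)) A \<partial>M) = (\<integral>\<^sup>+\<omega>. ennreal (measure (K (Z j \<omega>)) A) \<partial>M)"
    proof (rule nn_integral_eq_integral[symmetric])
      show "integrable M (\<lambda>\<omega>. measure (K (Z j \<omega>)) A)"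
      proof (rule integrable_const_bound[where B=1])
        show "AE x in M. norm (measure (K (Z j x)) A) \<le> 1"
          using measurable_space[OF Zj] kp by (auto intro!: AE_I2 prob_space.prob_le_1)
      qed (use A mK in \<open>auto intro: measurable_compose[OF Zj]\<close>)
    qed auto
    also have "\<dots> = (\<integral>\<^sup>+\<omega>. emeasure (K (Z j \<omega>)) A \<partial>M)"
      using measurable_space[OF Zj] kp by (intro nn_integral_cong) (simp add: finite_measure.emeasure_eq_measure prob_space.finite_measure)
    also have "\<dots> = (\<integral>\<^sup>+x. emeasure (K x) A \<partial>distr M S (Z j))"
      using A mKe by (simp add: nn_integral_distr)
    also have "\<dots> = emeasure (distr M S (Z j) \<bind> K) A"
      using emeasure_bind_prob_algebra[OF Pj K A] by simp
    finally show "emeasure (distr M S (Z (Suc j))) A = emeasure (distr M S (Z j) \<bind> K) A" .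
  qed
qed


lemma amgm: fixes u v l :: real assumes "0 < l" shows "u * v \<le> l / 2 * u\<^sup>2 + v\<^sup>2 / (2 * l)"
proof -
  have "l / 2 * u\<^sup>2 + v\<^sup>2 / (2 * l) - u * v = (l * u - v)\<^sup>2 / (2 * l)"
    using assms by (simp add: field_simps power2_eq_square)
  moreover have "0 \<le> (l * u - v)\<^sup>2 / (2 * l)" using assms by simp
  ultimately show ?thesis by linarith
qed

lemma core:
  fixes Q :: "'a measure" and r :: "'a \<Rightarrow> real" and I :: "'i set"
  assumes Q: "prob_space Q" and r[measurable]: "r \<in> borel_measurable Q"
    and rnn: "\<And>x. x \<in> space Q \<Longrightarrow> 0 \<le> r x"
    and P: "P = density Q (\<lambda>x. ennreal (r x))" and Pp: "prob_space P"
    and i2: "integrable Q (\<lambda>x. (r x - 1)\<^sup>2)"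
    and fin: "finite I"
    and A: "A \<in> sets (PiM I (\<lambda>_. Q))" and l: "0 < l"
  shows "measure (PiM I (\<lambda>_. Q)) A - measure (PiM I (\<lambda>_. P)) A
     \<le> l / 8 + ((1 + (\<integral>x. (r x - 1)\<^sup>2 \<partial>Q)) ^ card I - 1) / (2 * l)"
proof -
  interpret Q: prob_space Q by fact
  interpret P: prob_space P by fact
  define c where "c = (\<integral>x. (r x - 1)\<^sup>2 \<partial>Q)"
  have spP: "space P = space Q" and sP: "sets P = sets Q" using P by auto
  have "(\<integral>\<^sup>+x. ennreal (r x) \<partial>Q) = emeasure P (space P)"
    unfolding P by (simp add: emeasure_density)
  then have nr: "(\<integral>\<^sup>+x. ennreal (r x) \<partial>Q) = ennreal 1" using P.emeasure_space_1 by simp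
  have ir: "integrable Q r"
    by (rule integrableI_nn_integral_finite[OF r _ nr]) (simp add: rnn)
  have intr: "(\<integral>x. r x \<partial>Q) = 1"
    using integral_eq_nn_integral[OF r] nr rnn by simp
  have sq: "(\<lambda>x. (r x)\<^sup>2) = (\<lambda>x. (r x - 1)\<^sup>2 + 2 * r x - 1)"
    by (auto simp: power2_eq_square algebra_simps)
  have ir2: "integrable Q (\<lambda>x. (r x)\<^sup>2)"
    unfolding sq using i2 ir by auto
  have intr2: "(\<integral>x. (r x)\<^sup>2 \<partial>Q) = 1 + c"
    unfolding sq c_def using i2 ir intr by (simp add: Q.prob_space)
  interpret PS: product_prob_space "\<lambda>_::'i. Q" I
    by unfold_locales
  interpret PP: product_prob_space "\<lambda>_::'i. P" I
    by unfold_locales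
  let ?Q = "PiM I (\<lambda>_. Q)"
  let ?P = "PiM I (\<lambda>_. P)"
  interpret PQn: prob_space ?Q by (rule prob_space_PiM) (rule Q)
  define F where "F x = (\<Prod>i\<in>I. r (x i))" for x
  have iF: "integrable ?Q F"
    unfolding F_def by (rule PS.product_integrable_prod[OF fin ir])
  have intF: "(\<integral>x. F x \<partial>?Q) = 1"
    unfolding F_def by (subst PS.product_integral_prod[OF fin ir]) (simp add: intr)
  have F2: "(\<lambda>x. (F x)\<^sup>2) = (\<lambda>x. (\<Prod>i\<in>I. (r (x i))\<^sup>2))"
    unfolding F_def by (simp add: prod_power_distrib)
  have iF2: "integrable ?Q (\<lambda>x. (F x)\<^sup>2)"
    unfolding F2 by (rule PS.product_integrable_prod[OF fin ir2])
  have intF2: "(\<integral>x. (F x)\<^sup>2 \<partial>?Q) = (1 + c) ^ card I"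
    unfolding F2 by (subst PS.product_integral_prod[OF fin ir2]) (simp add: intr2)
  have Fm[measurable]: "F \<in> borel_measurable ?Q" using iF by auto
  have spQ: "x i \<in> space Q" if "x \<in> space ?Q" "i \<in> I" for x i
    using that by (auto simp: space_PiM)
  have Fnn: "0 \<le> F x" if "x \<in> space ?Q" for x
    unfolding F_def using spQ[OF that] rnn by (auto intro!: prod_nonneg)
  have dens: "density ?Q (\<lambda>x. ennreal (F x)) = ?P"
  proof (rule PP.PiM_eqI[OF fin])
    show "sets (density ?Q (\<lambda>x. ennreal (F x))) = sets ?P"
      using sP by (simp cong: sets_PiM_cong)
    fix B assume B: "\<And>i. i \<in> I \<Longrightarrow> B i \<in> sets P"
    then have BQ: "\<And>i. i \<in> I \<Longrightarrow> B i \<in> sets Q" using sP by auto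
    have PiB: "PiE I B \<in> sets ?Q" using BQ by (auto intro!: sets_PiM_I_finite fin)
    have "emeasure (density ?Q (\<lambda>x. ennreal (F x))) (PiE I B)
        = (\<integral>\<^sup>+x. ennreal (F x) * indicator (PiE I B) x \<partial>?Q)"
      using PiB by (simp add: emeasure_density)
    also have "\<dots> = (\<integral>\<^sup>+x. (\<Prod>i\<in>I. ennreal (r (x i)) * indicator (B i) (x i)) \<partial>?Q)"
    proof (rule nn_integral_cong)
      fix x assume x: "x \<in> space ?Q"
      have ex: "x \<in> extensional I" using x by (auto simp: space_PiM PiE_def)
      have "ennreal (F x) = (\<Prod>i\<in>I. ennreal (r (x i)))"
        unfolding F_def using spQ[OF x] rnn by (simp add: prod_ennreal)
      moreover have "indicator (PiE I B) x = (\<Prod>i\<in>I. indicator (B i) (x i) :: ennreal)"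
      proof cases
        assume "x \<in> PiE I B" then show ?thesis by (auto simp: indicator_def PiE_def Pi_def intro!: prod.neutral)
      next
        assume nx: "x \<notin> PiE I B"
        then obtain i where "i \<in> I" "x i \<notin> B i" using ex by (auto simp: PiE_def extensional_def Pi_def)
        then show ?thesis using nx fin by (auto simp: indicator_def intro!: prod_zero)
      qed
      ultimately show "ennreal (F x) * indicator (PiE I B) x = (\<Prod>i\<in>I. ennreal (r (x i)) * indicator (B i) (x i))"
        by (simp add: prod.distrib)
    qed
    also have "\<dots> = (\<Prod>i\<in>I. \<integral>\<^sup>+y. ennreal (r y) * indicator (B i) y \<partial>Q)"
      using BQ by (subst PS.product_nn_integral_prod[OF fin]) auto
    also have "\<dots> = (\<Prod>i\<in>I. emeasure P (B i))"
      using BQ unfolding P by (intro prod.cong refl) (simp add: emeasure_density)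
    finally show "emeasure (density ?Q (\<lambda>x. ennreal (F x))) (PiE I B) = (\<Prod>i\<in>I. emeasure P (B i))" .
  qed
  have iFA: "integrable ?Q (\<lambda>x. F x * indicator A x)"
    using A iF by (rule integrable_real_mult_indicator)
  have "emeasure ?P A = (\<integral>\<^sup>+x. ennreal (F x) * indicator A x \<partial>?Q)"
    using A dens[symmetric] by (simp add: emeasure_density)
  also have "\<dots> = (\<integral>\<^sup>+x. ennreal (F x * indicator A x) \<partial>?Q)"
    by (intro nn_integral_cong) (auto simp: indicator_def)
  also have "\<dots> = ennreal (\<integral>x. F x * indicator A x \<partial>?Q)"
    using iFA Fnn by (intro nn_integral_eq_integral) (auto simp: indicator_def)
  finally have mPA: "measure ?P A = (\<integral>x. F x * indicator A x \<partial>?Q)"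
    using Fnn by (simp add: measure_def integral_nonneg_AE indicator_def)
  define a where "a = measure ?Q A"
  have iA: "integrable ?Q (indicator A :: _ \<Rightarrow> real)"
    using A finite_measure.emeasure_finite[OF prob_space.finite_measure[OF prob_space_PiM[OF Q]]] by (intro integrable_real_indicator) (auto simp: less_top[symmetric])
  have mQA: "(\<integral>x. indicator A x \<partial>?Q) = a"
    unfolding a_def using A by simp
  define n where "n = card I"
  define R where "R x = (l / 2 * (1 - 2 * a)) * indicator A x + (l / 2 * a\<^sup>2 + a + 1 / (2 * l))
      - (1 / l + a) * F x + (1 / (2 * l)) * (F x)\<^sup>2" for x
  have pw: "indicator A x - F x * indicator A x \<le> R x" for x
  proof -
    let ?i = "indicator A x :: real"
    have e0: "?i - F x * ?i = (?i - a) * (1 - F x) + a * (1 - F x)" by (simp add: algebra_simps)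
    have e1: "(?i - a)\<^sup>2 = (1 - 2 * a) * ?i + a\<^sup>2"
      by (cases "x \<in> A") (simp_all add: power2_eq_square algebra_simps)
    have e2: "(1 - F x)\<^sup>2 / (2 * l) = 1 / (2 * l) - F x / l + (1 / (2 * l)) * (F x)\<^sup>2"
      using l by (simp add: field_simps power2_eq_square)
    have "(?i - a) * (1 - F x) \<le> l / 2 * (?i - a)\<^sup>2 + (1 - F x)\<^sup>2 / (2 * l)"
      by (rule amgm[OF l])
    then show ?thesis unfolding R_def e0 e1 e2 by (simp add: algebra_simps)
  qed
  have iR: "integrable ?Q R"
    unfolding R_def using iA iF iF2 by auto
  have intR: "(\<integral>x. R x \<partial>?Q) = (l / 2 * (1 - 2 * a)) * a + (l / 2 * a\<^sup>2 + a + 1 / (2 * l))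
      - (1 / l + a) * 1 + (1 / (2 * l)) * (1 + c) ^ n"
    unfolding R_def n_def using iA iF iF2 intF intF2 mQA by (simp add: prob_space.prob_space[OF prob_space_PiM[OF Q]])
  have "measure ?Q A - measure ?P A = (\<integral>x. indicator A x - F x * indicator A x \<partial>?Q)"
    using mPA mQA iA iFA a_def by simp
  also have "\<dots> \<le> (\<integral>x. R x \<partial>?Q)"
    using iA iFA iR pw by (intro integral_mono) auto
  also have "\<dots> \<le> l / 8 + ((1 + c) ^ n - 1) / (2 * l)"
  proof -
    have "0 \<le> l / 2 * (a - 1/2)\<^sup>2" using l by simp
    then have "l / 2 * (a - a\<^sup>2) \<le> l / 8" by (simp add: power2_eq_square algebra_simps)
    moreover have "(\<integral>x. R x \<partial>?Q) = l / 2 * (a - a\<^sup>2) + ((1 + c) ^ n - 1) / (2 * l)"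
      unfolding intR using l by (simp add: field_simps power2_eq_square)
    ultimately show ?thesis by linarith
  qed
  finally show ?thesis unfolding c_def n_def .
qed

lemma final_arith:
  fixes c x :: real and n :: nat
  assumes c: "0 \<le> c" and x: "0 < x" "x \<le> 1" and h: "4 * x \<le> (1 + c) ^ n - 1"
  shows "x \<le> real n * c"
proof (rule ccontr)
  assume "\<not> x \<le> real n * c"
  then have y: "real n * c < x" by simp
  define y where "y = real n * c"
  have y0: "0 \<le> y" unfolding y_def using c by simp
  have y1: "y \<le> 1" using y x unfolding y_def by simp
  have "(1 + c) ^ n \<le> exp c ^ n"
    using c by (intro power_mono) (auto simp: exp_ge_add_one_self add.commute)
  also have "\<dots> = exp y" unfolding y_def by (simp add: exp_of_nat_mult)
  also have "exp y = exp (y / 2) ^ 2" by (simp add: exp_double[symmetric])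
  also have "\<dots> \<le> (1 + y) ^ 2"
  proof (rule power_mono)
    have "norm (exp (y / 2)) \<le> 1 + 2 * norm (y / 2)"
      by (rule exp_bound_lemma) (use y0 y1 in simp)
    then show "exp (y / 2) \<le> 1 + y" using y0 by simp
  qed simp
  also have "\<dots> \<le> 1 + 3 * y" using y0 y1 by (simp add: power2_eq_square algebra_simps) (smt (verit) mult_left_le)
  finally show False using h y x(1) y0 unfolding y_def by linarith
qed
theorem corollary5:
  fixes M0 M1 :: "'o measure" and S :: "'z measure" and T :: "'y measure"
    and Z :: "nat \<Rightarrow> 'o \<Rightarrow> 'z" and t u H :: nat
    and K :: "nat \<Rightarrow> 'z \<Rightarrow> 'z measure" and \<eta> :: "nat \<Rightarrow> real"
    and g :: "'z \<Rightarrow> 'y" and D2 \<epsilon> :: real and n :: nat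
    and \<psi> :: "(nat \<Rightarrow> 'y) \<Rightarrow> bool"
  assumes "prob_space M0" and "prob_space M1"
    and "t < u" and "u \<le> H"
    and "\<And>i. i \<le> H \<Longrightarrow> Z i \<in> M0 \<rightarrow>\<^sub>M S"
    and "\<And>i. i \<le> H \<Longrightarrow> Z i \<in> M1 \<rightarrow>\<^sub>M S"
    and "absolutely_continuous (distr M1 S (Z t)) (distr M0 S (Z t))"
    and "chi2 (distr M0 S (Z t)) (distr M1 S (Z t)) = ennreal D2" and "0 < D2"
    and "\<And>j. t \<le> j \<Longrightarrow> j < u \<Longrightarrow> K j \<in> S \<rightarrow>\<^sub>M prob_algebra S"
    and "\<And>j. t \<le> j \<Longrightarrow> j < u \<Longrightarrow> markov_step M0 S Z t j (K j)"
    and "\<And>j. t \<le> j \<Longrightarrow> j < u \<Longrightarrow> markov_step M1 S Z t j (K j)"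
    and "\<And>j. t \<le> j \<Longrightarrow> j < u \<Longrightarrow> 0 < \<eta> j \<and> \<eta> j \<le> 1"
    and "\<And>j. t \<le> j \<Longrightarrow> j < u \<Longrightarrow> eta_chi2 S (K j) \<le> ennreal (\<eta> j)"
    and "g \<in> S \<rightarrow>\<^sub>M T"
    and "0 < \<epsilon>" and "\<epsilon> < 1/2"
    and "\<psi> \<in> PiM {..<n} (\<lambda>_. T) \<rightarrow>\<^sub>M count_space UNIV"
    and "total_test_error n (distr M0 T (\<lambda>\<omega>. g (Z u \<omega>))) (distr M1 T (\<lambda>\<omega>. g (Z u \<omega>))) \<psi> \<le> \<epsilon>"
  shows "real n \<ge> (1 - \<epsilon>)\<^sup>2 / ((\<Prod>j\<in>{t..<u}. \<eta> j) * D2)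
         \<and> (\<forall>\<eta>0. (\<forall>j\<in>{t..<u}. \<eta> j = \<eta>0) \<longrightarrow> real n \<ge> (1 - \<epsilon>)\<^sup>2 / (\<eta>0 ^ (u - t) * D2))"
proof -
  note Zm0 = assms(5) and Zm1 = assms(6)
  interpret M0: prob_space M0 by fact
  interpret M1: prob_space M1 by fact
  define P where "P j = distr M0 S (Z j)" for j
  define Q where "Q j = distr M1 S (Z j)" for j
  have PA: "P j \<in> space (prob_algebra S)" if "j \<le> H" for j
    unfolding P_def using Zm0[OF that] by (auto simp: space_prob_algebra intro!: M0.prob_space_distr)
  have QA: "Q j \<in> space (prob_algebra S)" if "j \<le> H" for j
    unfolding Q_def using Zm1[OF that] by (auto simp: space_prob_algebra intro!: M1.prob_space_distr)
  have stepP: "P (Suc j) = P j \<bind> K j" if "t \<le> j" "j < u" for j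
    unfolding P_def using that assms(4) by (intro distr_step[OF assms(1) that(1)] Zm0 assms(10) assms(11)) auto
  have stepQ: "Q (Suc j) = Q j \<bind> K j" if "t \<le> j" "j < u" for j
    unfolding Q_def using that assms(4) by (intro distr_step[OF assms(2) that(1)] Zm1 assms(10) assms(12)) auto
  have prodnn: "0 \<le> (\<Prod>j\<in>{t..<k}. \<eta> j)" if "k \<le> u" for k
    using assms(13) that by (intro prod_nonneg) (auto simp: less_imp_le)
  have chain: "absolutely_continuous (Q (t + k)) (P (t + k)) \<and>
      chi2 (P (t + k)) (Q (t + k)) \<le> ennreal ((\<Prod>j\<in>{t..<t + k}. \<eta> j) * D2)" if "k \<le> u - t" for k
    using that
  proof (induction k)
    case 0
    then show ?case using assms(7,8) by (simp add: P_def Q_def)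
  next
    case (Suc k)
    define j where "j = t + k"
    have j: "t \<le> j" "j < u" "j \<le> H" using Suc.prems assms(3,4) unfolding j_def by auto
    have IH: "absolutely_continuous (Q j) (P j)" "chi2 (P j) (Q j) \<le> ennreal ((\<Prod>j\<in>{t..<j}. \<eta> j) * D2)"
      using Suc by (auto simp: j_def)
    have sj: "t + Suc k = Suc j" by (simp add: j_def)
    have pP: "prob_space (P j)" and pQ: "prob_space (Q j)" and sPQ: "sets (P j) = sets (Q j)"
      using PA[OF j(3)] QA[OF j(3)] by (auto simp: space_prob_algebra)
    have ac: "absolutely_continuous (Q (Suc j)) (P (Suc j))"
      unfolding stepP[OF j(1,2)] stepQ[OF j(1,2)]
      by (rule bind_ac[OF PA[OF j(3)] QA[OF j(3)] assms(10)[OF j(1,2)] IH(1)])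
    have "chi2 (P (Suc j)) (Q (Suc j)) \<le> ennreal (\<eta> j) * chi2 (P j) (Q j)"
      unfolding stepP[OF j(1,2)] stepQ[OF j(1,2)]
    proof (rule chi2_step[OF PA[OF j(3)] QA[OF j(3)] assms(10)[OF j(1,2)] IH(1) _ assms(14)[OF j(1,2)]])
      show "chi2 (P j) (Q j) < \<infinity>" using IH(2) by (simp add: le_less_trans)
      show "chi2 (P j) (Q j) = 0 \<Longrightarrow> P j = Q j"
        by (rule chi2_zero_eq[OF pP pQ sPQ IH(1)])
      show "prob_space (Q j \<bind> K j) \<Longrightarrow> chi2 (Q j \<bind> K j) (Q j \<bind> K j) = 0"
        by (rule chi2_self)
    qed
    also have "\<dots> \<le> ennreal (\<eta> j) * ennreal ((\<Prod>j\<in>{t..<j}. \<eta> j) * D2)"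
      using IH(2) by (rule mult_left_mono) simp
    also have "\<dots> = ennreal ((\<Prod>j\<in>{t..<Suc j}. \<eta> j) * D2)"
      using assms(13)[OF j(1,2)] prodnn[of j] j assms(9)
      by (simp add: ennreal_mult[symmetric] prod.atLeastLessThan_Suc mult_ac)
    finally show ?case using ac sj by simp
  qed
  have tu: "t + (u - t) = u" using assms(3) by simp
  define B where "B = (\<Prod>j\<in>{t..<u}. \<eta> j) * D2"
  have acu: "absolutely_continuous (Q u) (P u)" and chiu: "chi2 (P u) (Q u) \<le> ennreal B"
    using chain[of "u - t"] unfolding tu B_def by auto
  have uH: "u \<le> H" by (rule assms(4))
  have pPu: "prob_space (P u)" and pQu: "prob_space (Q u)" and sPQu: "sets (P u) = sets (Q u)"
    and sPu: "sets (P u) = sets S" and sQu: "sets (Q u) = sets S"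
    using PA[OF uH] QA[OF uH] by (auto simp: space_prob_algebra)
  interpret Qu: prob_space "Q u" by (rule pQu)
  interpret Pu: prob_space "P u" by (rule pPu)
  define f where "f = RN_deriv (Q u) (P u)"
  have finf: "AE x in Q u. f x \<noteq> \<infinity>"
    unfolding f_def by (rule Qu.RN_deriv_finite) (use acu sPQu in \<open>auto intro: Pu.sigma_finite_measure\<close>)
  define r where "r x = enn2real (f x)" for x
  have fm[measurable]: "f \<in> borel_measurable (Q u)" unfolding f_def by simp
  have rm[measurable]: "r \<in> borel_measurable (Q u)" unfolding r_def by measurable
  have rnn: "0 \<le> r x" for x unfolding r_def by simp
  have dens: "P u = density (Q u) (\<lambda>x. ennreal (r x))"
  proof -
    have "density (Q u) f = density (Q u) (\<lambda>x. ennreal (r x))"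
      by (rule density_cong) (use finf in \<open>auto simp: r_def ennreal_enn2real_if\<close>)
    then show ?thesis using Qu.density_RN_deriv[OF acu sPQu] unfolding f_def by simp
  qed
  have chir: "chi2 (P u) (Q u) = (\<integral>\<^sup>+x. ennreal ((r x - 1)\<^sup>2) \<partial>Q u)"
    unfolding chi2_def r_def f_def using acu by simp
  have Bnn: "0 \<le> B" unfolding B_def using prodnn[of u] assms(9) by simp
  have ii: "integrable (Q u) (\<lambda>x. (r x - 1)\<^sup>2)"
  proof (rule integrableI_bounded)
    have "(\<integral>\<^sup>+x. ennreal (norm ((r x - 1)\<^sup>2)) \<partial>Q u) = chi2 (P u) (Q u)" unfolding chir by simp
    also have "\<dots> < \<infinity>" using chiu by (simp add: le_less_trans)
    finally show "(\<integral>\<^sup>+x. ennreal (norm ((r x - 1)\<^sup>2)) \<partial>Q u) < \<infinity>" .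
  qed simp
  define c where "c = (\<integral>x. (r x - 1)\<^sup>2 \<partial>Q u)"
  have c0: "0 \<le> c" unfolding c_def by simp
  have "ennreal c = chi2 (P u) (Q u)" unfolding chir c_def
    by (rule nn_integral_eq_integral[symmetric]) (use ii in auto)
  then have "ennreal c \<le> ennreal B" using chiu by simp
  then have cB: "c \<le> B" using Bnn by (simp add: ennreal_le_iff)
  define I where "I = {..<n}"
  have finI: "finite I" and cI: "card I = n" unfolding I_def by auto
  have gP[measurable]: "g \<in> P u \<rightarrow>\<^sub>M T" using assms(15) sPu by (simp cong: measurable_cong_sets)
  have gQ[measurable]: "g \<in> Q u \<rightarrow>\<^sub>M T" using assms(15) sQu by (simp cong: measurable_cong_sets)
  have Y0: "distr M0 T (\<lambda>\<omega>. g (Z u \<omega>)) = distr (P u) T g"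
    unfolding P_def using Zm0[OF uH] assms(15) by (subst distr_distr) (auto simp: comp_def)
  have Y1: "distr M1 T (\<lambda>\<omega>. g (Z u \<omega>)) = distr (Q u) T g"
    unfolding Q_def using Zm1[OF uH] assms(15) by (subst distr_distr) (auto simp: comp_def)
  have PiY: "PiM {..<n} (\<lambda>_. distr R T g) = distr (PiM I (\<lambda>_. R)) (PiM I (\<lambda>_. T)) (compose I g)"
    if pR: "prob_space R" and sR: "sets R = sets S" for R
  proof -
    interpret R: prob_space R by (rule pR)
    let ?T = "distr R T g"
    have gR: "g \<in> R \<rightarrow>\<^sub>M T" using assms(15) sR by (simp cong: measurable_cong_sets)
    have gRT: "g \<in> R \<rightarrow>\<^sub>M ?T" using gR by (subst measurable_cong_sets[OF refl sets_distr])
    have a: "distr R ?T g = distr R T g" by (rule distr_cong) auto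
    have "PiM I (\<lambda>_. distr R ?T g) = distr (PiM I (\<lambda>_. R)) (PiM I (\<lambda>_. ?T)) (compose I g)"
      by (rule distr_PiM_finite_prob_space'[symmetric]) (auto intro: pR R.prob_space_distr gR gRT simp: finI)
    also have "\<dots> = distr (PiM I (\<lambda>_. R)) (PiM I (\<lambda>_. T)) (compose I g)"
      by (rule distr_cong) (auto intro!: sets_PiM_cong)
    finally show ?thesis unfolding a I_def .
  qed
  have PiY0: "PiM {..<n} (\<lambda>_. distr (P u) T g) = distr (PiM I (\<lambda>_. P u)) (PiM I (\<lambda>_. T)) (compose I g)"
    by (rule PiY[OF pPu sPu])
  have PiY1: "PiM {..<n} (\<lambda>_. distr (Q u) T g) = distr (PiM I (\<lambda>_. Q u)) (PiM I (\<lambda>_. T)) (compose I g)"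
    by (rule PiY[OF pQu sQu])
  have cmP: "compose I g \<in> PiM I (\<lambda>_. P u) \<rightarrow>\<^sub>M PiM I (\<lambda>_. T)"
    unfolding compose_def
  proof (rule measurable_restrict)
    fix i assume "i \<in> I"
    then show "(\<lambda>x. g (x i)) \<in> PiM I (\<lambda>_. P u) \<rightarrow>\<^sub>M T"
      by (intro measurable_compose[where f="\<lambda>x. x i", OF _ gP] measurable_component_singleton)
  qed
  have sPiPQ: "sets (PiM I (\<lambda>_. P u)) = sets (PiM I (\<lambda>_. Q u))" by (rule sets_PiM_cong) (auto simp: sPQu)
  have spPiPQ: "space (PiM I (\<lambda>_. P u)) = space (PiM I (\<lambda>_. Q u))" by (rule sets_eq_imp_space_eq[OF sPiPQ])
  have cmQ: "compose I g \<in> PiM I (\<lambda>_. Q u) \<rightarrow>\<^sub>M PiM I (\<lambda>_. T)"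
    using cmP sPiPQ by (simp cong: measurable_cong_sets)
  define Ap where "Ap = {x \<in> space (PiM I (\<lambda>_. T)). \<psi> x}"
  have Ap_eq: "Ap = \<psi> -` {True} \<inter> space (PiM I (\<lambda>_. T))" unfolding Ap_def by auto
  have Aps: "Ap \<in> sets (PiM I (\<lambda>_. T))"
    unfolding Ap_eq using measurable_sets[OF assms(18), of "{True}"] by (simp add: I_def)
  define A where "A = compose I g -` Ap \<inter> space (PiM I (\<lambda>_. P u))"
  have AsP: "A \<in> sets (PiM I (\<lambda>_. P u))" unfolding A_def by (rule measurable_sets[OF cmP Aps])
  have AsQ: "A \<in> sets (PiM I (\<lambda>_. Q u))" using AsP sPiPQ by simp
  have pPiQ: "prob_space (PiM I (\<lambda>_. Q u))" by (rule prob_space_PiM) (rule pQu)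
  have e0: "measure (PiM {..<n} (\<lambda>_. distr M0 T (\<lambda>\<omega>. g (Z u \<omega>))))
      {x \<in> space (PiM {..<n} (\<lambda>_. distr M0 T (\<lambda>\<omega>. g (Z u \<omega>)))). \<psi> x}
      = measure (PiM I (\<lambda>_. P u)) A"
  proof -
    have "{x \<in> space (distr (PiM I (\<lambda>_. P u)) (PiM I (\<lambda>_. T)) (compose I g)). \<psi> x} = Ap"
      by (simp add: Ap_def)
    then show ?thesis unfolding Y0 PiY0 A_def by (simp add: measure_distr[OF cmP Aps])
  qed
  have e1: "measure (PiM {..<n} (\<lambda>_. distr M1 T (\<lambda>\<omega>. g (Z u \<omega>))))
      {x \<in> space (PiM {..<n} (\<lambda>_. distr M1 T (\<lambda>\<omega>. g (Z u \<omega>)))). \<not> \<psi> x}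
      = 1 - measure (PiM I (\<lambda>_. Q u)) A"
  proof -
    have Cs: "space (PiM I (\<lambda>_. T)) - Ap \<in> sets (PiM I (\<lambda>_. T))" using Aps by auto
    have "{x \<in> space (distr (PiM I (\<lambda>_. Q u)) (PiM I (\<lambda>_. T)) (compose I g)). \<not> \<psi> x} = space (PiM I (\<lambda>_. T)) - Ap"
      by (auto simp: Ap_def)
    moreover have "compose I g -` (space (PiM I (\<lambda>_. T)) - Ap) \<inter> space (PiM I (\<lambda>_. Q u)) = space (PiM I (\<lambda>_. Q u)) - A"
      unfolding A_def spPiPQ using measurable_space[OF cmQ] by auto
    ultimately show ?thesis unfolding Y1 PiY1
      by (simp add: measure_distr[OF cmQ Cs] prob_space.prob_compl[OF pPiQ AsQ])
  qed
  have err: "measure (PiM I (\<lambda>_. P u)) A + (1 - measure (PiM I (\<lambda>_. Q u)) A) \<le> \<epsilon>"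
    using assms(19) unfolding total_test_error_def e0 e1 .
  define l where "l = 4 * (1 - \<epsilon>)"
  have l0: "0 < l" unfolding l_def using assms(17) by simp
  have core_ap: "measure (PiM I (\<lambda>_. Q u)) A - measure (PiM I (\<lambda>_. P u)) A
     \<le> l / 8 + ((1 + c) ^ n - 1) / (2 * l)"
    using core[OF pQu rm _ dens pPu ii finI AsQ l0] rnn unfolding c_def cI by blast
  have pr: "1 - \<epsilon> \<le> l / 8 + ((1 + c) ^ n - 1) / (2 * l)" using err core_ap by linarith
  have eqs: "l / 8 = (1 - \<epsilon>) / 2" "2 * l = 8 * (1 - \<epsilon>)" by (simp_all add: l_def)
  define X where "X = ((1 + c) ^ n - 1) / (8 * (1 - \<epsilon>))"
  have "1 - \<epsilon> \<le> (1 - \<epsilon>) / 2 + X" using pr unfolding eqs X_def .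
  then have "(1 - \<epsilon>) / 2 \<le> ((1 + c) ^ n - 1) / (8 * (1 - \<epsilon>))" unfolding X_def[symmetric] by (smt (verit) field_sum_of_halves)
  then have "(1 - \<epsilon>) / 2 * (8 * (1 - \<epsilon>)) \<le> (1 + c) ^ n - 1"
    using assms(17) by (subst (asm) pos_le_divide_eq) auto
  moreover have eq4: "(1 - \<epsilon>) / 2 * (8 * (1 - \<epsilon>)) = 4 * (1 - \<epsilon>)\<^sup>2"
    by (simp add: power2_eq_square field_simps)
  ultimately have h4: "4 * (1 - \<epsilon>)\<^sup>2 \<le> (1 + c) ^ n - 1" by simp
  have x0: "0 < (1 - \<epsilon>)\<^sup>2" and x1: "(1 - \<epsilon>)\<^sup>2 \<le> 1" using assms(16,17)
    by (auto simp: power2_eq_square mult_le_one)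
  have xn: "(1 - \<epsilon>)\<^sup>2 \<le> real n * c" by (rule final_arith[OF c0 x0 x1 h4])
  have "0 < real n * c" using xn x0 by linarith
  then have "c \<noteq> 0" by auto
  then have Bpos: "0 < B" using cB c0 by linarith
  have main: "(1 - \<epsilon>)\<^sup>2 / B \<le> real n"
  proof -
    have "real n * c \<le> real n * B" using cB by (intro mult_left_mono) auto
    then show ?thesis using xn Bpos by (simp add: pos_divide_le_eq)
  qed
  show ?thesis
  proof
    show "real n \<ge> (1 - \<epsilon>)\<^sup>2 / ((\<Prod>j\<in>{t..<u}. \<eta> j) * D2)" using main by (simp add: B_def)
    show "\<forall>\<eta>0. (\<forall>j\<in>{t..<u}. \<eta> j = \<eta>0) \<longrightarrow> real n \<ge> (1 - \<epsilon>)\<^sup>2 / (\<eta>0 ^ (u - t) * D2)"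
    proof (intro allI impI)
      fix \<eta>0 assume h: "\<forall>j\<in>{t..<u}. \<eta> j = \<eta>0"
      have "(\<Prod>j\<in>{t..<u}. \<eta> j) = \<eta>0 ^ (u - t)" using h by simp
      then show "real n \<ge> (1 - \<epsilon>)\<^sup>2 / (\<eta>0 ^ (u - t) * D2)" using main by (simp add: B_def)
    qed
  qed
qed

end
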